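(* For every $\alpha\in[m,M]$ (where $m=\inf_{n\ge1}b_n$, $M=\sup_{n\ge1}b_n$), the limit \[ L(\alpha)=\lim_{x\to+\infty}\frac{1}{\ln x}\sum_{\substack{1\le n\le x\\ b_n\le\alpha}}\frac1n \] exists and equals \[ L(\alpha)=\frac{1}{\ln s}\int_{E_\alpha}\frac{dx}{x},\qquad E_\alpha=\{x\in[s^{-1},1):\ \lambda(x)\le\alpha\}, \] the integral being a Lebesgue integral.
   Context: Fix integers $p\ge 3$ and $2\le s<p$, and a set $A\subset\{0,1,\dots,p-1\}$ with $\#A=s$. Let $h:\{0,1,\dots,s-1\}\to A$ be the unique strictly increasing bijection. For a positive integer $n$ with base-$s$ expansion $n=\sum_{i=0}^k\varepsilon_i s^i$ ($\varepsilon_i\in\{0,\dots,s-1\}$, $\varepsilon_k\ne 0$), put $a_n=\sum_{i=0}^k h(\varepsilon_i)p^i$, and put $a_0=h(0)$. Let $b_n=a_n/n^{\log_s p}$ for $n\ge1$. For real $x\ge0$ let $a(x)=a_{\lfloor x\rfloor}$, and for $x>0$ let $\lambda(x)=\lim_{k\to\infty}\frac{a(s^kx)}{(s^kx)^{\log_s p}}$ (this limit exists for every $x>0$). *)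

theory Defs
  imports "HOL-Analysis.Analysis"
begin

definition hmap :: "nat set \<Rightarrow> nat \<Rightarrow> nat" where
  "hmap A i = sorted_list_of_set A ! i"

text \<open>a_n: replace each base-s digit eps_i of n by h(eps_i) and read in base p.
  The digits of n \<ge> 1 are eps_i = (n div s^i) mod s for the indices i with s^i \<le> n.\<close>
definition aseq :: "nat \<Rightarrow> nat \<Rightarrow> nat set \<Rightarrow> nat \<Rightarrow> nat" where
  "aseq p s A n = (if n = 0 then hmap A 0
     else (\<Sum>i\<in>{i. s ^ i \<le> n}. hmap A ((n div s ^ i) mod s) * p ^ i))"

definition bseq :: "nat \<Rightarrow> nat \<Rightarrow> nat set \<Rightarrow> nat \<Rightarrow> real" where
  "bseq p s A n = real (aseq p s A n) / real n powr log (real s) (real p)"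

definition afun :: "nat \<Rightarrow> nat \<Rightarrow> nat set \<Rightarrow> real \<Rightarrow> nat" where
  "afun p s A x = aseq p s A (nat \<lfloor>x\<rfloor>)"

definition lam :: "nat \<Rightarrow> nat \<Rightarrow> nat set \<Rightarrow> real \<Rightarrow> real" where
  "lam p s A x = lim (\<lambda>k. real (afun p s A (real s ^ k * x)) /
                          (real s ^ k * x) powr log (real s) (real p))"

end

theory Submission
  imports Defs
begin


lemma cesaro:
  fixes X :: "nat \<Rightarrow> real"
  assumes D: "(\<lambda>n. X (Suc n) - X n) \<longlonglongrightarrow> L"
  shows "(\<lambda>n. X n / real n) \<longlonglongrightarrow> L"
proof (rule LIMSEQ_I)
  fix e :: real assume e: "0 < e"
  from LIMSEQ_D[OF D, of "e / 2"] e obtain N where N: "\<And>n. n \<ge> N \<Longrightarrow> \<bar>X (Suc n) - X n - L\<bar> < e / 2"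
    by auto
  define C where "C = \<bar>X N - real N * L\<bar>"
  obtain M :: nat where M: "M > 2 * C / e" using reals_Archimedean2 by blast
  show "\<exists>no. \<forall>n\<ge>no. norm (X n / real n - L) < e"
  proof (intro exI[of _ "max (Suc N) M"] allI impI)
    fix n assume n: "max (Suc N) M \<le> n"
    then have nN: "N \<le> n" and nM: "M \<le> n" and n0: "real n > 0" by auto
    have tel: "X n - X N = (\<Sum>i = N..<n. X (Suc i) - X i)" using sum_Suc_diff'[OF nN, of X] by simp
    have s2: "(\<Sum>i = N..<n. (X (Suc i) - X i - L)) = (X n - X N) - real (n - N) * L"
      unfolding tel by (simp add: sum_subtractf)
    have "real (n - N) = real n - real N" using nN by (simp add: of_nat_diff)
    then have "X n - real n * L = (X N - real N * L) + (\<Sum>i = N..<n. (X (Suc i) - X i - L))"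
      unfolding s2 by (simp add: algebra_simps)
    then have "\<bar>X n - real n * L\<bar> \<le> C + \<bar>\<Sum>i = N..<n. (X (Suc i) - X i - L)\<bar>"
      unfolding C_def by linarith
    also have "\<bar>\<Sum>i = N..<n. (X (Suc i) - X i - L)\<bar> \<le> (\<Sum>i = N..<n. \<bar>X (Suc i) - X i - L\<bar>)"
      by (rule sum_abs)
    also have "\<dots> \<le> real (card {N..<n}) * (e / 2)"
      using N by (intro sum_bounded_above) (auto intro: less_imp_le)
    also have "\<dots> \<le> real n * (e / 2)" using e by (intro mult_right_mono) auto
    finally have b: "\<bar>X n - real n * L\<bar> \<le> C + real n * (e / 2)" by simp
    have "C < real n * (e / 2)"
    proof -
      have "2 * C / e < real n" using M nM by linarith
      then show ?thesis using e by (simp add: field_simps)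
    qed
    with b have "\<bar>X n - real n * L\<bar> < real n * e" by linarith
    moreover have "X n / real n - L = (X n - real n * L) / real n" using n0 by (simp add: field_simps)
    ultimately show "norm (X n / real n - L) < e" using n0 by (simp add: abs_divide pos_divide_less_eq mult.commute)
  qed
qed


locale dig =
  fixes p s :: nat and A :: "nat set"
  assumes p3: "p \<ge> 3" and s2: "2 \<le> s" and sp: "s < p"
    and Asub: "A \<subseteq> {0..<p}" and cardA: "card A = s"
begin

abbreviation "h \<equiv> hmap A"
abbreviation "a \<equiv> aseq p s A"

lemma finA: "finite A" using Asub finite_subset by blast

lemma h_in: "e < s \<Longrightarrow> h e \<in> A"
  unfolding hmap_def using finA cardA
  by (metis length_sorted_list_of_set nth_mem set_sorted_list_of_set)

lemma h_lt: assumes "e < s" shows "h e < p"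
  using h_in[OF assms] Asub by auto

lemma h_mono: "e < e' \<Longrightarrow> e' < s \<Longrightarrow> h e < h e'"
  unfolding hmap_def using finA cardA
  by (metis length_sorted_list_of_set sorted_wrt_nth_less strict_sorted_list_of_set)

lemma h_ge: "e < s \<Longrightarrow> e \<le> h e"
proof (induction e)
  case 0 then show ?case by simp
next
  case (Suc e) then show ?case using h_mono[of e "Suc e"] by simp
qed

lemma fin_pow: "finite {i. s ^ i \<le> (n::nat)}"
proof -
  have "{i. s ^ i \<le> n} \<subseteq> {..<n}"
  proof
    fix i assume "i \<in> {i. s ^ i \<le> n}"
    then have "s ^ i \<le> n" by simp
    moreover have "(2::nat) ^ i \<le> s ^ i" using s2 by (simp add: power_mono)
    then have "i < s ^ i" using less_exp[of i] by linarith
    ultimately show "i \<in> {..<n}" by simp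
  qed
  then show ?thesis using finite_subset by blast
qed

lemma a_digit:
  assumes n: "1 \<le> n" and e: "e < s"
  shows "a (s * n + e) = p * a n + h e"
proof -
  let ?m = "s * n + e"
  have set_eq: "{i. s ^ i \<le> ?m} = insert 0 (Suc ` {i. s ^ i \<le> n})"
  proof (rule set_eqI, rule iffI)
    fix i assume "i \<in> {i. s ^ i \<le> ?m}"
    then have i: "s ^ i \<le> ?m" by simp
    show "i \<in> insert 0 (Suc ` {i. s ^ i \<le> n})"
    proof (cases i)
      case 0 then show ?thesis by simp
    next
      case (Suc j)
      have "s ^ j \<le> n"
      proof (rule ccontr)
        assume "\<not> s ^ j \<le> n"
        then have "n + 1 \<le> s ^ j" by simp
        then have "s * (n+1) \<le> s * s ^ j" by (rule mult_le_mono2)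
        then show False using i Suc e by (simp add: algebra_simps)
      qed
      then show ?thesis using Suc by simp
    qed
  next
    fix i assume "i \<in> insert 0 (Suc ` {i. s ^ i \<le> n})"
    then show "i \<in> {i. s ^ i \<le> ?m}"
    proof
      assume "i = 0"
      have "1 * 1 \<le> s * n" using n s2 by (intro mult_le_mono) auto
      then have "1 \<le> s * n + e" by linarith
      then show ?thesis using \<open>i = 0\<close> by simp
    next
      assume "i \<in> Suc ` {i. s ^ i \<le> n}"
      then obtain j where j: "i = Suc j" "s ^ j \<le> n" by auto
      have "s * s ^ j \<le> s * n" by (rule mult_le_mono2[OF j(2)])
      moreover have "s ^ i = s * s ^ j" using j(1) by simp
      ultimately have "s ^ i \<le> s * n + e" by linarith
      then show ?thesis by simp
    qed
  qed
  have mdiv: "?m div s = n" using e s2 by simp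
  have mmod: "?m mod s = e" using e s2 by simp
  have "a ?m = (\<Sum>i\<in>{i. s ^ i \<le> ?m}. h ((?m div s ^ i) mod s) * p ^ i)"
    unfolding aseq_def using n s2 by simp
  also have "\<dots> = h e + (\<Sum>i\<in>Suc ` {i. s ^ i \<le> n}. h ((?m div s ^ i) mod s) * p ^ i)"
    unfolding set_eq using fin_pow mmod by (subst sum.insert) auto
  also have "(\<Sum>i\<in>Suc ` {i. s ^ i \<le> n}. h ((?m div s ^ i) mod s) * p ^ i)
      = (\<Sum>i\<in>{i. s ^ i \<le> n}. h ((?m div s ^ Suc i) mod s) * p ^ Suc i)"
    by (subst sum.reindex) auto
  also have "\<dots> = (\<Sum>i\<in>{i. s ^ i \<le> n}. p * (h ((n div s ^ i) mod s) * p ^ i))"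
  proof (rule sum.cong)
    fix i
    have "?m div s ^ Suc i = n div s ^ i"
      by (simp only: power_Suc div_mult2_eq mdiv)
    then show "h ((?m div s ^ Suc i) mod s) * p ^ Suc i = p * (h ((n div s ^ i) mod s) * p ^ i)"
      by simp
  qed simp
  also have "\<dots> = p * a n"
    unfolding aseq_def using n by (simp add: sum_distrib_left)
  finally show ?thesis by simp
qed

lemma a_single:
  assumes "1 \<le> e" "e < s" shows "a e = h e"
proof -
  have "{i. s ^ i \<le> e} = {0}"
  proof (rule set_eqI, rule iffI)
    fix i assume "i \<in> {i. s ^ i \<le> e}"
    then have "s ^ i \<le> e" by simp
    have "i = 0"
    proof (rule ccontr)
      assume "i \<noteq> 0"
      then have "s ^ 1 \<le> s ^ i" using s2 by (intro power_increasing) auto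
      then show False using \<open>s ^ i \<le> e\<close> assms by simp
    qed
    then show "i \<in> {0}" by simp
  qed (use assms in simp)
  then show ?thesis unfolding aseq_def using assms by simp
qed

lemma a_split: "1 \<le> m div s \<Longrightarrow> a m = p * a (m div s) + h (m mod s)"
proof -
  assume "1 \<le> m div s"
  have "m = s * (m div s) + m mod s" by simp
  then have "a m = a (s * (m div s) + m mod s)" by simp
  also have "\<dots> = p * a (m div s) + h (m mod s)"
    using a_digit[OF \<open>1 \<le> m div s\<close>, of "m mod s"] s2 by simp
  finally show ?thesis .
qed

lemma a_block:
  assumes "1 \<le> n" "s ^ i * n \<le> m" "m < s ^ i * (n + 1)"
  shows "p ^ i * a n \<le> a m \<and> a m + 1 \<le> p ^ i * (a n + 1)"
  using assms(2,3)
proof (induction i arbitrary: m)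
  case 0 then have "m = n" by simp
  then show ?case by simp
next
  case (Suc i)
  let ?m' = "m div s"
  have sp0: "0 < s" using s2 by simp
  have l1: "s ^ i * n \<le> ?m'"
    using Suc.prems(1) sp0 by (simp add: less_eq_div_iff_mult_less_eq mult_ac)
  have l2: "?m' < s ^ i * (n + 1)"
    using Suc.prems(2) sp0 by (simp add: div_less_iff_less_mult mult_ac)
  have "1 \<le> s ^ i * n" using assms(1) sp0 by (simp add: one_le_mult_iff)
  then have m1: "1 \<le> ?m'" using l1 by linarith
  have IH: "p ^ i * a n \<le> a ?m' \<and> a ?m' + 1 \<le> p ^ i * (a n + 1)"
    using Suc.IH[OF l1 l2] .
  have am: "a m = p * a ?m' + h (m mod s)" by (rule a_split[OF m1])
  have hl: "h (m mod s) + 1 \<le> p" using h_lt[of "m mod s"] sp0 by simp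
  have "p ^ Suc i * a n = p * (p ^ i * a n)" by simp
  also have "\<dots> \<le> p * a ?m'" using IH by simp
  also have "\<dots> \<le> a m" using am by simp
  finally have c1: "p ^ Suc i * a n \<le> a m" .
  have "a m + 1 = p * a ?m' + (h (m mod s) + 1)" using am by simp
  also have "\<dots> \<le> p * a ?m' + p" using hl by simp
  also have "\<dots> = p * (a ?m' + 1)" by simp
  also have "\<dots> \<le> p * (p ^ i * (a n + 1))" using IH by (intro mult_le_mono2) simp
  also have "\<dots> = p ^ Suc i * (a n + 1)" by (simp add: algebra_simps)
  finally show ?case using c1 by simp
qed

lemma a_bound:
  assumes "1 \<le> n" "n < s ^ K"
  shows "1 \<le> a n \<and> a n < p ^ K"
  using assms
proof (induction K arbitrary: n)
  case 0 then show ?case by simp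
next
  case (Suc K)
  show ?case
  proof (cases "n < s")
    case True
    then have "a n = h n" using a_single Suc.prems by simp
    moreover have "1 \<le> h n" using h_ge[OF True] Suc.prems by simp
    moreover have "h n < p" using h_lt[OF True] .
    moreover have "p \<le> p ^ Suc K" using p3 by simp
    ultimately show ?thesis by (metis less_le_trans)
  next
    case False
    then have m1: "1 \<le> n div s" using s2 by (simp add: less_eq_div_iff_mult_less_eq)
    have "n div s < s ^ K" using Suc.prems(2) s2
      by (simp add: div_less_iff_less_mult mult_ac)
    with Suc.IH[OF m1] have IH: "1 \<le> a (n div s) \<and> a (n div s) < p ^ K" by simp
    have am: "a n = p * a (n div s) + h (n mod s)" by (rule a_split[OF m1])
    have hl: "h (n mod s) + 1 \<le> p" using h_lt[of "n mod s"] s2 by simp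
    have "a n + 1 \<le> p * (a (n div s) + 1)" using am hl by simp
    also have "\<dots> \<le> p * p ^ K" using IH by (intro mult_le_mono2) simp
    finally have "a n < p ^ Suc K" by simp
    moreover have "1 \<le> a n" using am IH p3 by (simp add: trans_le_add1 one_le_mult_iff)
    ultimately show ?thesis by simp
  qed
qed

abbreviation "r \<equiv> real s"
abbreviation "q \<equiv> real p"
abbreviation "d \<equiv> log (real s) (real p)"

definition mk :: "nat \<Rightarrow> real \<Rightarrow> nat" where "mk k y = nat \<lfloor>r ^ k * y\<rfloor>"
definition cc :: "nat \<Rightarrow> real \<Rightarrow> real" where "cc k y = real (a (mk k y)) / q ^ k"

lemma r_pos: "r > 1" using s2 by simp
lemma q_pos: "q > 1" using p3 by simp
lemma d_gt1: "d > 1"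
proof -
  have "log r r < log r q" using r_pos sp by (subst log_less_cancel_iff) auto
  then show ?thesis using r_pos by simp
qed

lemma rpow_d: "(r ^ k) powr d = q ^ k"
proof -
  have "(r ^ k) powr d = (r powr real k) powr d" using r_pos by (simp add: powr_realpow)
  also have "\<dots> = (r powr d) ^ k" using r_pos by (simp add: powr_powr powr_power mult_ac)
  also have "\<dots> = q ^ k" using r_pos q_pos by simp
  finally show ?thesis .
qed

lemma rpow_d_mult: "y \<ge> 0 \<Longrightarrow> (r ^ k * y) powr d = q ^ k * y powr d"
  using rpow_d by (simp add: powr_mult)

lemma nat_lt: "z < int N \<Longrightarrow> 0 < N \<Longrightarrow> nat z < N" by linarith

lemma floor_scale:
  assumes "t \<ge> 0"
  shows "s ^ i * nat \<lfloor>t\<rfloor> \<le> nat \<lfloor>r ^ i * t\<rfloor> \<and> nat \<lfloor>r ^ i * t\<rfloor> < s ^ i * (nat \<lfloor>t\<rfloor> + 1)"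
proof -
  let ?n = "nat \<lfloor>t\<rfloor>"
  have t1: "real ?n \<le> t" "t < real ?n + 1" using assms by linarith+
  have ri: "r ^ i > 0" using r_pos by simp
  have "real (s ^ i * ?n) \<le> r ^ i * t" using t1(1) ri by simp
  then have "int (s ^ i * ?n) \<le> \<lfloor>r ^ i * t\<rfloor>"
    unfolding le_floor_iff by (metis of_int_of_nat_eq)
  then have c1: "s ^ i * ?n \<le> nat \<lfloor>r ^ i * t\<rfloor>" by linarith
  have "r ^ i * t < r ^ i * (real ?n + 1)" using t1(2) ri by (rule mult_strict_left_mono)
  then have "r ^ i * t < real (s ^ i * (?n + 1))" by (simp add: algebra_simps)
  then have "\<lfloor>r ^ i * t\<rfloor> < int (s ^ i * (?n + 1))"
    unfolding floor_less_iff of_int_of_nat_eq .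
  then have c2: "nat \<lfloor>r ^ i * t\<rfloor> < s ^ i * (?n + 1)"
    by (rule nat_lt) (use s2 in simp)
  show ?thesis using c1 c2 by simp
qed

lemma mk_range:
  assumes y: "1 / r \<le> y" "y < 1" and k: "1 \<le> k"
  shows "1 \<le> mk k y \<and> mk k y < s ^ k"
proof -
  have "r ^ k * (1 / r) \<le> r ^ k * y" using y r_pos by (intro mult_left_mono) auto
  moreover have "r ^ k * (1 / r) = r ^ (k - 1)" using k r_pos
    by (cases k) auto
  moreover have "1 \<le> r ^ (k - 1)" using r_pos by simp
  ultimately have l: "1 \<le> r ^ k * y" by linarith
  have u: "r ^ k * y < r ^ k" using y r_pos by simp
  have "1 \<le> \<lfloor>r ^ k * y\<rfloor>" using l by linarith
  moreover have "\<lfloor>r ^ k * y\<rfloor> < int (s ^ k)"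
    using u unfolding floor_less_iff by simp
  ultimately show ?thesis unfolding mk_def by linarith
qed

lemma mk_shift:
  assumes "y \<ge> 0"
  shows "s ^ i * mk j y \<le> mk (j + i) y \<and> mk (j + i) y < s ^ i * (mk j y + 1)"
proof -
  have e: "r ^ (j + i) * y = r ^ i * (r ^ j * y)" by (simp add: power_add mult_ac)
  have "r ^ j * y \<ge> 0" using assms r_pos by simp
  from floor_scale[OF this, of i] show ?thesis unfolding mk_def e .
qed

lemma cc_block:
  assumes y: "1 / r \<le> y" "y < 1" and j: "1 \<le> j" and jk: "j \<le> k"
  shows "cc j y \<le> cc k y \<and> cc k y \<le> (real (a (mk j y)) + 1) / q ^ j"
proof -
  obtain i where ki: "k = j + i" using jk le_Suc_ex by blast
  have y0: "y \<ge> 0" using y r_pos by (smt (verit) divide_pos_pos)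
  have n1: "1 \<le> mk j y" using mk_range[OF y j] by simp
  have B: "p ^ i * a (mk j y) \<le> a (mk k y) \<and> a (mk k y) + 1 \<le> p ^ i * (a (mk j y) + 1)"
    using a_block[OF n1] mk_shift[OF y0, of i j] ki by simp
  have B1: "q ^ i * real (a (mk j y)) \<le> real (a (mk k y))"
  proof -
    have "real (p ^ i * a (mk j y)) \<le> real (a (mk k y))" using B of_nat_mono by blast
    then show ?thesis by simp
  qed
  have B2: "real (a (mk k y)) \<le> q ^ i * (real (a (mk j y)) + 1)"
  proof -
    have "a (mk k y) \<le> p ^ i * (a (mk j y) + 1)" using B by linarith
    then have "real (a (mk k y)) \<le> real (p ^ i * (a (mk j y) + 1))" using of_nat_mono by blast
    then show ?thesis by (simp add: algebra_simps)
  qed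
  have qk: "q ^ k = q ^ j * q ^ i" using ki by (simp add: power_add)
  have qp: "q ^ j > 0" "q ^ i > 0" using q_pos by auto
  have "cc j y = q ^ i * real (a (mk j y)) / q ^ k" unfolding cc_def qk using qp by simp
  also have "\<dots> \<le> cc k y" unfolding cc_def by (rule divide_right_mono[OF B1]) (use qp in simp)
  finally have c1: "cc j y \<le> cc k y" .
  have "cc k y \<le> q ^ i * (real (a (mk j y)) + 1) / q ^ k"
    unfolding cc_def by (rule divide_right_mono[OF B2]) (use qp in simp)
  also have "\<dots> = (real (a (mk j y)) + 1) / q ^ j" unfolding qk using qp by simp
  finally show ?thesis using c1 by simp
qed

lemma cc_le1:
  assumes y: "1 / r \<le> y" "y < 1" and k: "1 \<le> k"
  shows "cc k y \<le> 1" "1 / q ^ k \<le> cc k y"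
proof -
  have m: "1 \<le> mk k y" "mk k y < s ^ k" using mk_range[OF y k] by auto
  have b: "1 \<le> a (mk k y)" "a (mk k y) < p ^ k" using a_bound[OF m] by auto
  have "real (a (mk k y)) \<le> q ^ k" using b(2) by (metis less_imp_le of_nat_le_iff of_nat_power)
  then show "cc k y \<le> 1" unfolding cc_def using q_pos by simp
  have "1 \<le> real (a (mk k y))" using b(1) by simp
  then show "1 / q ^ k \<le> cc k y" unfolding cc_def using q_pos by (simp add: divide_right_mono)
qed

definition LL :: "real \<Rightarrow> real" where "LL y = lim (\<lambda>k. cc k y)"

lemma cc_conv:
  assumes y: "1 / r \<le> y" "y < 1"
  shows "(\<lambda>k. cc k y) \<longlonglongrightarrow> LL y"
proof -
  have inc: "incseq (\<lambda>k. cc (Suc k) y)"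
    by (rule incseq_SucI) (use cc_block[OF y] in simp)
  have bd: "\<forall>k. cc (Suc k) y \<le> 1" using cc_le1(1)[OF y] by simp
  obtain L where "(\<lambda>k. cc (Suc k) y) \<longlonglongrightarrow> L" using incseq_convergent[OF inc bd] by blast
  then have "(\<lambda>k. cc k y) \<longlonglongrightarrow> L" by (rule LIMSEQ_imp_Suc)
  then show ?thesis unfolding LL_def by (simp add: limI)
qed

lemma LL_bounds:
  assumes y: "1 / r \<le> y" "y < 1" and j: "1 \<le> j"
  shows "cc j y \<le> LL y \<and> LL y \<le> (real (a (mk j y)) + 1) / q ^ j"
proof
  show "cc j y \<le> LL y"
    by (rule LIMSEQ_le_const[OF cc_conv[OF y]]) (use cc_block[OF y j] in auto)
  show "LL y \<le> (real (a (mk j y)) + 1) / q ^ j"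
    by (rule LIMSEQ_le_const2[OF cc_conv[OF y]]) (use cc_block[OF y j] in auto)
qed

lemma LL_pos: assumes y: "1 / r \<le> y" "y < 1" shows "LL y > 0"
proof -
  have "1 / q ^ 1 \<le> cc 1 y" using cc_le1(2)[OF y, of 1] by simp
  moreover have "cc 1 y \<le> LL y" using LL_bounds[OF y, of 1] by simp
  ultimately show ?thesis using q_pos by (smt (verit) divide_pos_pos power_one_right)
qed

lemma lam_eq:
  assumes y: "1 / r \<le> y" "y < 1"
  shows "lam p s A y = LL y / y powr d"
proof -
  have y0: "y > 0" using y r_pos by (smt (verit) divide_pos_pos)
  have "(\<lambda>k. real (afun p s A (real s ^ k * y)) / (real s ^ k * y) powr d) = (\<lambda>k. cc k y / y powr d)"
  proof
    fix k
    have "(real s ^ k * y) powr d = q ^ k * y powr d" using rpow_d_mult y0 by simp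
    then show "real (afun p s A (real s ^ k * y)) / (real s ^ k * y) powr d = cc k y / y powr d"
      unfolding cc_def afun_def mk_def by simp
  qed
  moreover have "(\<lambda>k. cc k y / y powr d) \<longlonglongrightarrow> LL y / y powr d"
    using y0 by (intro tendsto_divide cc_conv[OF y] tendsto_const) simp
  ultimately show ?thesis unfolding lam_def by (simp add: limI)
qed

abbreviation "SS \<equiv> {1 / real s..<1::real}"

lemma lam_seq_conv:
  assumes y: "1 / r \<le> y" "y < 1"
  shows "(\<lambda>k. real (aseq p s A (nat \<lfloor>r ^ k * y\<rfloor>)) / (r ^ k * y) powr d) \<longlonglongrightarrow> lam p s A y"
proof -
  have y0: "y > 0" using y r_pos by (smt (verit) divide_pos_pos)
  have "(\<lambda>k. real (aseq p s A (nat \<lfloor>r ^ k * y\<rfloor>)) / (r ^ k * y) powr d) = (\<lambda>k. cc k y / y powr d)"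
  proof
    fix k
    have "(real s ^ k * y) powr d = q ^ k * y powr d" using rpow_d_mult y0 by simp
    then show "real (aseq p s A (nat \<lfloor>r ^ k * y\<rfloor>)) / (r ^ k * y) powr d = cc k y / y powr d"
      unfolding cc_def mk_def by simp
  qed
  moreover have "(\<lambda>k. cc k y / y powr d) \<longlonglongrightarrow> LL y / y powr d"
    using y0 by (intro tendsto_divide cc_conv[OF y] tendsto_const) simp
  ultimately show ?thesis using lam_eq[OF y] by simp
qed

lemma g_meas: "(\<lambda>x. indicator SS x * lam p s A x) \<in> borel_measurable borel"
proof (rule borel_measurable_LIMSEQ_metric)
  fix k
  have m1: "(\<lambda>x. real (aseq p s A (nat \<lfloor>r ^ k * x\<rfloor>))) \<in> borel_measurable borel"
    by measurable
  show "(\<lambda>x. indicator SS x * (real (aseq p s A (nat \<lfloor>r ^ k * x\<rfloor>)) / (r ^ k * x) powr d)) \<in> borel_measurable borel"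
    using m1 by measurable
next
  fix x :: real
  show "(\<lambda>k. indicator SS x * (real (aseq p s A (nat \<lfloor>r ^ k * x\<rfloor>)) / (r ^ k * x) powr d))
     \<longlonglongrightarrow> indicator SS x * lam p s A x"
  proof (cases "x \<in> SS")
    case True
    then show ?thesis using lam_seq_conv[of x] by simp
  next
    case False
    then show ?thesis by simp
  qed
qed

lemma E_meas: "{x \<in> SS. lam p s A x \<le> al} \<in> sets lebesgue"
proof -
  have [measurable]: "(\<lambda>x. indicator SS x * lam p s A x) \<in> borel_measurable borel" by (rule g_meas)
  have "{x \<in> SS. lam p s A x \<le> al} = SS \<inter> {x. indicator SS x * lam p s A x \<le> al}" by auto
  also have "\<dots> \<in> sets borel" by measurable
  finally show ?thesis by simp
qed

lemma Z_meas: "{x \<in> SS. lam p s A x = al} \<in> sets lebesgue"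
proof -
  have [measurable]: "(\<lambda>x. indicator SS x * lam p s A x) \<in> borel_measurable borel" by (rule g_meas)
  have "{x \<in> SS. lam p s A x = al} = SS \<inter> {x. indicator SS x * lam p s A x = al}" by auto
  also have "\<dots> \<in> sets borel" by measurable
  finally show ?thesis by simp
qed

lemma powd_gap:
  assumes y1: "1 / r \<le> y1" and y12: "y1 \<le> y2"
  shows "(r / q) * (y2 - y1) \<le> y2 powr d - y1 powr d"
proof -
  have y1p: "y1 > 0" using y1 r_pos by (smt (verit) divide_pos_pos)
  have y2p: "y2 > 0" using y1p y12 by simp
  have e: "\<And>y::real. y > 0 \<Longrightarrow> y powr d = y powr (d - 1) * y"
    by (simp add: powr_diff)
  have m: "y1 powr (d - 1) \<le> y2 powr (d - 1)" using d_gt1 y1p y12 by (intro powr_mono2) auto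
  have "(1 / r) powr (d - 1) \<le> y1 powr (d - 1)" using d_gt1 y1 r_pos by (intro powr_mono2) auto
  moreover have "(1 / r) powr (d - 1) = r / q"
  proof -
    have "(1 / r) powr (d - 1) = r powr 1 / r powr d" using r_pos
      by (simp add: powr_divide powr_diff)
    then show ?thesis using r_pos q_pos by simp
  qed
  ultimately have l: "r / q \<le> y1 powr (d - 1)" by simp
  have "(r / q) * (y2 - y1) \<le> y1 powr (d - 1) * (y2 - y1)" using l y12 by (intro mult_right_mono) auto
  also have "\<dots> \<le> y2 powr (d - 1) * y2 - y1 powr (d - 1) * y1"
    using m y2p by (simp add: algebra_simps mult_right_mono)
  also have "\<dots> = y2 powr d - y1 powr d" using e y1p y2p by simp
  finally show ?thesis .
qed

lemma Z_close:
  assumes al: "al > 0" and j: "1 \<le> j"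
    and y1: "y1 \<in> SS" "lam p s A y1 = al" and y2: "y2 \<in> SS" "lam p s A y2 = al"
    and eq: "mk j y1 = mk j y2"
  shows "\<bar>y2 - y1\<bar> \<le> (q / r) * (1 / (al * q ^ j))"
proof -
  have key: "(r / q) * (v - u) \<le> 1 / (al * q ^ j)"
    if u: "u \<in> SS" "lam p s A u = al" and v: "v \<in> SS" "lam p s A v = al"
      and uv: "u \<le> v" and e: "mk j u = mk j v" for u v
  proof -
    have up: "u > 0" "v > 0" using u v r_pos by (auto intro: less_le_trans[of 0 "1/r"])
    have Lu: "LL u = al * u powr d" using lam_eq[of u] u up by (simp add: field_simps)
    have Lv: "LL v = al * v powr d" using lam_eq[of v] v up by (simp add: field_simps)
    have bu: "cc j u \<le> LL u" using LL_bounds[of u j] u j by simp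
    have bv: "LL v \<le> (real (a (mk j v)) + 1) / q ^ j" using LL_bounds[of v j] v j by simp
    have "LL v - LL u \<le> (real (a (mk j v)) + 1) / q ^ j - real (a (mk j v)) / q ^ j"
      using bu bv e unfolding cc_def by simp
    also have "\<dots> = 1 / q ^ j" by (simp add: diff_divide_distrib[symmetric])
    finally have "al * (v powr d - u powr d) \<le> 1 / q ^ j" using Lu Lv by (simp add: algebra_simps)
    then have "v powr d - u powr d \<le> (1 / q ^ j) / al" using al
      by (subst pos_le_divide_eq) (auto simp: mult.commute)
    then have "v powr d - u powr d \<le> 1 / (al * q ^ j)" by (simp add: mult.commute)
    moreover have "(r / q) * (v - u) \<le> v powr d - u powr d" using powd_gap[of u v] u uv by simp
    ultimately show ?thesis by linarith
  qed
  have rq: "r / q > 0" using r_pos q_pos by simp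
  have "(r / q) * \<bar>y2 - y1\<bar> \<le> 1 / (al * q ^ j)"
  proof (cases "y1 \<le> y2")
    case True then show ?thesis using key[OF y1 y2 True eq] by simp
  next
    case False then show ?thesis using key[OF y2 y1 _ eq[symmetric]] by simp
  qed
  then have "(q / r) * ((r / q) * \<bar>y2 - y1\<bar>) \<le> (q / r) * (1 / (al * q ^ j))"
    using rq by (intro mult_left_mono) auto
  then show ?thesis using r_pos q_pos by simp
qed

lemma lam_pos: assumes "x \<in> SS" shows "lam p s A x > 0"
proof -
  have x0: "x > 0" using assms r_pos by (auto intro: less_le_trans[of 0 "1/r"])
  show ?thesis using lam_eq[of x] LL_pos[of x] assms x0 by simp
qed

lemma Z_null: "{x \<in> SS. lam p s A x = al} \<in> null_sets lebesgue"
proof (cases "al > 0")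
  case False
  then have eq: "{x \<in> SS. lam p s A x = al} = {}" using lam_pos by force
  show ?thesis by (subst eq) simp
next
  case al: True
  let ?Z = "{x \<in> SS. lam p s A x = al}"
  have "emeasure lebesgue ?Z \<le> 0"
  proof (rule ennreal_le_epsilon)
    fix e :: real assume e: "0 < e"
    have rq: "0 \<le> r / q" "r / q < 1" using r_pos q_pos sp by auto
    have "(\<lambda>j. (r / q) ^ j) \<longlonglongrightarrow> 0" using rq by (intro LIMSEQ_power_zero) auto
    moreover have "e * r * al / (2 * q) > 0" using e r_pos q_pos al by simp
    ultimately have "eventually (\<lambda>j. (r / q) ^ j < e * r * al / (2 * q)) sequentially"
      by (simp add: order_tendstoD(2))
    then obtain j where j1: "1 \<le> j" and jb: "(r / q) ^ j < e * r * al / (2 * q)"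
      unfolding eventually_sequentially by (metis le_add2 add.commute)
    define w where "w = (q / r) * (1 / (al * q ^ j))"
    have w0: "w \<ge> 0" unfolding w_def using r_pos q_pos al by simp
    define N where "N = {1..<s ^ j}"
    define yn where "yn n = (SOME y. y \<in> ?Z \<and> mk j y = n)" for n
    define Cov where "Cov n = {yn n - w .. yn n + w}" for n
    have sub: "?Z \<subseteq> (\<Union>n\<in>N. Cov n)"
    proof
      fix y assume y: "y \<in> ?Z"
      let ?n = "mk j y"
      have nN: "?n \<in> N" unfolding N_def using mk_range[of y j] y j1 by auto
      have "\<exists>y'. y' \<in> ?Z \<and> mk j y' = ?n" using y by blast
      then have yy: "yn ?n \<in> ?Z \<and> mk j (yn ?n) = ?n" unfolding yn_def by (rule someI_ex)
      have "\<bar>y - yn ?n\<bar> \<le> w" unfolding w_def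
        by (rule Z_close[OF al j1]) (use yy y in auto)
      then have "y \<in> Cov ?n" unfolding Cov_def by auto
      then show "y \<in> (\<Union>n\<in>N. Cov n)" using nN by blast
    qed
    have "emeasure lebesgue ?Z \<le> emeasure lebesgue (\<Union>n\<in>N. Cov n)"
      by (rule emeasure_mono[OF sub]) (auto simp: Cov_def)
    also have "\<dots> \<le> (\<Sum>n\<in>N. emeasure lebesgue (Cov n))"
      by (rule emeasure_subadditive_finite) (auto simp: N_def Cov_def)
    also have "\<dots> = (\<Sum>n\<in>N. ennreal (2 * w))"
      by (rule sum.cong) (auto simp: Cov_def w0)
    also have "\<dots> = ennreal (real (card N) * (2 * w))"
      using w0 by (simp add: ennreal_mult ennreal_of_nat_eq_real_of_nat)
    also have "\<dots> \<le> ennreal e"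
    proof (rule ennreal_leI)
      have "real (card N) \<le> r ^ j" unfolding N_def by simp
      then have "real (card N) * (2 * w) \<le> r ^ j * (2 * w)" using w0 by (intro mult_right_mono) auto
      also have "r ^ j * (2 * w) = (2 * q / (r * al)) * (r / q) ^ j"
        unfolding w_def using r_pos q_pos al by (simp add: field_simps power_divide)
      also have "\<dots> \<le> (2 * q / (r * al)) * (e * r * al / (2 * q))"
        using jb r_pos q_pos al by (intro mult_left_mono) auto
      also have "\<dots> = e" using r_pos q_pos al by (simp add: field_simps)
      finally show "real (card N) * (2 * w) \<le> e" .
    qed
    finally show "emeasure lebesgue ?Z \<le> 0 + ennreal e" by simp
  qed
  then show ?thesis using Z_meas[of al] by (intro null_setsI) auto
qed

definition fb :: "real \<Rightarrow> nat \<Rightarrow> real" where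
  "fb al n = (if bseq p s A n \<le> al then 1 / real n else 0)"

definition sK :: "real \<Rightarrow> nat \<Rightarrow> real \<Rightarrow> real" where
  "sK al K x = indicator SS x * (r ^ K * fb al (nat \<lfloor>r ^ K * x\<rfloor>))"

lemma ind_floor:
  assumes c: "(c::real) > 0"
  shows "(x \<in> {real n / c ..< (real n + 1) / c}) = (\<lfloor>c * x\<rfloor> = int n)"
proof -
  have "(x \<in> {real n / c ..< (real n + 1) / c}) = (real n \<le> c * x \<and> c * x < real n + 1)"
    using c by (auto simp: pos_divide_le_eq pos_less_divide_eq mult.commute)
  also have "\<dots> = (\<lfloor>c * x\<rfloor> = int n)" by (simp add: floor_eq_iff)
  finally show ?thesis .
qed

lemma SS_iff:
  assumes K: "1 \<le> K"
  shows "(x \<in> SS) = (r ^ (K - 1) \<le> r ^ K * x \<and> r ^ K * x < r ^ K)"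
proof -
  have rK: "r ^ K = r * r ^ (K - 1)" using K by (cases K) auto
  have p1: "r ^ (K - 1) > 0" using r_pos by simp
  have "(1 / r \<le> x) = (r ^ (K - 1) \<le> r ^ K * x)"
    unfolding rK using r_pos p1 by (auto simp: divide_le_eq mult.assoc mult.commute[of "r"])
  moreover have "(x < 1) = (r ^ K * x < r ^ K)" using r_pos by simp
  ultimately show ?thesis by simp
qed

lemma sK_sum:
  assumes K: "1 \<le> K"
  shows "sK al K x = (\<Sum>n\<in>{s ^ (K - 1)..<s ^ K}. indicator {real n / r ^ K ..< (real n + 1) / r ^ K} x * (r ^ K * fb al n))"
proof -
  have c: "r ^ K > 0" using r_pos by simp
  let ?N = "{s ^ (K - 1)..<s ^ K}"
  have "(\<Sum>n\<in>?N. indicator {real n / r ^ K ..< (real n + 1) / r ^ K} x * (r ^ K * fb al n))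
      = (\<Sum>n\<in>?N. if \<lfloor>r ^ K * x\<rfloor> = int n then r ^ K * fb al n else 0)"
    by (rule sum.cong[OF refl]) (simp only: indicator_def ind_floor[OF c] if_distrib if_distribR, simp)
  also have "\<dots> = sK al K x"
  proof (cases "x \<in> SS")
    case True
    then have b: "r ^ (K - 1) \<le> r ^ K * x" "r ^ K * x < r ^ K" using SS_iff[OF K] by auto
    define n0 where "n0 = nat \<lfloor>r ^ K * x\<rfloor>"
    have "real (s ^ (K - 1)) \<le> r ^ K * x" using b by simp
    then have n1: "s ^ (K - 1) \<le> n0" unfolding n0_def by (rule le_nat_floor)
    have "r ^ K * x < real (s ^ K)" using b by simp
    then have "\<lfloor>r ^ K * x\<rfloor> < int (s ^ K)" unfolding floor_less_iff of_int_of_nat_eq .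
    then have n2: "n0 < s ^ K" unfolding n0_def by (rule nat_lt) (use s2 in simp)
    have "0 \<le> r ^ (K - 1)" using r_pos by simp
    then have "0 \<le> \<lfloor>r ^ K * x\<rfloor>" using b(1) by linarith
    then have fl: "\<lfloor>r ^ K * x\<rfloor> = int n0" unfolding n0_def by simp
    have "(\<Sum>n\<in>?N. if \<lfloor>r ^ K * x\<rfloor> = int n then r ^ K * fb al n else 0)
        = (\<Sum>n\<in>?N. if n0 = n then r ^ K * fb al n else 0)"
      by (rule sum.cong) (auto simp: fl)
    also have "\<dots> = r ^ K * fb al n0" using n1 n2 by (simp add: sum.delta)
    finally show ?thesis unfolding sK_def n0_def using True by simp
  next
    case False
    have "\<lfloor>r ^ K * x\<rfloor> \<noteq> int n" if "n \<in> ?N" for n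
    proof
      assume fl: "\<lfloor>r ^ K * x\<rfloor> = int n"
      then have "real n \<le> r ^ K * x" "r ^ K * x < real n + 1" by linarith+
      moreover have "r ^ (K - 1) \<le> real n" using that
        by (simp only: of_nat_power[symmetric] of_nat_le_iff atLeastLessThan_iff)
      moreover have "n + 1 \<le> s ^ K" using that by auto
      then have "real (n + 1) \<le> real (s ^ K)" by (simp only: of_nat_le_iff)
      then have "real n + 1 \<le> r ^ K" by simp
      ultimately have "r ^ (K - 1) \<le> r ^ K * x" "r ^ K * x < r ^ K" by linarith+
      then have "x \<in> SS" using SS_iff[OF K, of x] by blast
      then show False using False by blast
    qed
    then show ?thesis unfolding sK_def using False by simp
  qed
  finally show ?thesis by simp
qed

lemma hb_Ico:
  assumes "u \<le> v"
  shows "has_bochner_integral lebesgue (\<lambda>x. indicator {u..<v} x * c) ((v - u) * (c::real))"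
proof -
  have "emeasure lebesgue {u..<v} = ennreal (v - u)" using assms by simp
  then have m: "measure lebesgue {u..<v} = v - u" using assms by (simp add: measure_def)
  have "has_bochner_integral lebesgue (indicator {u..<v}) (measure lebesgue {u..<v})"
    by (rule has_bochner_integral_real_indicator) (use assms in auto)
  then show ?thesis unfolding m by (intro has_bochner_integral_mult_left)
qed

lemma sK_integral:
  assumes K: "1 \<le> K"
  shows "has_bochner_integral lebesgue (sK al K) (\<Sum>n\<in>{s ^ (K - 1)..<s ^ K}. fb al n)"
proof -
  have c: "r ^ K > 0" using r_pos by simp
  have e: "sK al K = (\<lambda>x. \<Sum>n\<in>{s ^ (K - 1)..<s ^ K}. indicator {real n / r ^ K ..< (real n + 1) / r ^ K} x * (r ^ K * fb al n))"
    using sK_sum[OF K] by (intro ext) simp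
  have "has_bochner_integral lebesgue (\<lambda>x. indicator {real n / r ^ K ..< (real n + 1) / r ^ K} x * (r ^ K * fb al n)) (fb al n)"
    for n
  proof -
    have le: "real n / r ^ K \<le> (real n + 1) / r ^ K" using c by (simp add: divide_right_mono)
    have "((real n + 1) / r ^ K - real n / r ^ K) = 1 / r ^ K"
      by (simp add: diff_divide_distrib[symmetric])
    then have "((real n + 1) / r ^ K - real n / r ^ K) * (r ^ K * fb al n) = fb al n"
      using c by simp
    with hb_Ico[OF le, of "r ^ K * fb al n"] show ?thesis by (simp only:)
  qed
  then show ?thesis unfolding e by (intro has_bochner_integral_sum)
qed

lemma SS_pos: "x \<in> SS \<Longrightarrow> x > 0"
  using r_pos by (auto intro: less_le_trans[of 0 "1/r"])

lemma mk_lower: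
  assumes x: "x \<in> SS" and K: "1 \<le> K"
  shows "s ^ (K - 1) \<le> mk K x"
proof -
  have "r ^ (K - 1) \<le> r ^ K * x" using SS_iff[OF K] x by blast
  then have "real (s ^ (K - 1)) \<le> r ^ K * x" by simp
  then show ?thesis unfolding mk_def by (rule le_nat_floor)
qed

lemma mkfl:
  assumes "x > 0"
  shows "r ^ K * x - 1 \<le> real (nat \<lfloor>r ^ K * x\<rfloor>) \<and> real (nat \<lfloor>r ^ K * x\<rfloor>) \<le> r ^ K * x"
proof -
  have y0: "r ^ K * x > 0" using assms r_pos by simp
  then have f0: "0 \<le> \<lfloor>r ^ K * x\<rfloor>" by simp
  then have e: "real (nat \<lfloor>r ^ K * x\<rfloor>) = real_of_int \<lfloor>r ^ K * x\<rfloor>" by simp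
  show ?thesis unfolding e using floor_correct[of "r ^ K * x"] by linarith
qed

lemma mkr_conv:
  assumes x: "x \<in> SS"
  shows "(\<lambda>K. real (mk K x) / r ^ K) \<longlonglongrightarrow> x"
proof (rule tendsto_sandwich)
  have x0: "x > 0" using SS_pos[OF x] .
  have rp: "\<And>K. r ^ K > 0" using r_pos by simp
  show "\<forall>\<^sub>F K in sequentially. x - inverse (r ^ K) \<le> real (mk K x) / r ^ K"
  proof (intro always_eventually allI)
    fix K
    have "r ^ K * x - 1 \<le> real (mk K x)" unfolding mk_def using mkfl[OF x0] by simp
    then have "(r ^ K * x - 1) / r ^ K \<le> real (mk K x) / r ^ K"
      using rp[of K] by (intro divide_right_mono) auto
    moreover have "(r ^ K * x - 1) / r ^ K = x - inverse (r ^ K)"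
      using rp[of K] by (simp add: field_simps)
    ultimately show "x - inverse (r ^ K) \<le> real (mk K x) / r ^ K" by simp
  qed
  show "\<forall>\<^sub>F K in sequentially. real (mk K x) / r ^ K \<le> x"
  proof (intro always_eventually allI)
    fix K
    have "real (mk K x) \<le> r ^ K * x" unfolding mk_def using mkfl[OF x0] by simp
    then show "real (mk K x) / r ^ K \<le> x"
      using rp[of K] by (simp add: field_simps)
  qed
  show "(\<lambda>K. x - inverse (r ^ K)) \<longlonglongrightarrow> x"
    using LIMSEQ_inverse_realpow_zero[OF r_pos] tendsto_diff[OF tendsto_const] by fastforce
qed (simp)

lemma b_conv:
  assumes x: "x \<in> SS"
  shows "(\<lambda>K. bseq p s A (mk K x)) \<longlonglongrightarrow> lam p s A x"
proof -
  have x0: "x > 0" using SS_pos[OF x] .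
  have xs: "1 / r \<le> x" "x < 1" using x by auto
  have "(\<lambda>K. cc K x / (real (mk K x) / r ^ K) powr d) \<longlonglongrightarrow> LL x / x powr d"
    using x0 by (intro tendsto_divide cc_conv[OF xs] tendsto_powr mkr_conv[OF x] tendsto_const) auto
  moreover have "eventually (\<lambda>K. cc K x / (real (mk K x) / r ^ K) powr d = bseq p s A (mk K x)) sequentially"
    unfolding eventually_sequentially
  proof (intro exI allI impI)
    fix K :: nat assume K: "1 \<le> K"
    have n1: "1 \<le> mk K x" using mk_range[OF xs K] by simp
    have rp: "r ^ K > 0" using r_pos by simp
    have t0: "(real (mk K x) / r ^ K) powr d > 0" using n1 rp by simp
    have "real (mk K x) powr d = (r ^ K * (real (mk K x) / r ^ K)) powr d" using rp by simp
    also have "\<dots> = q ^ K * (real (mk K x) / r ^ K) powr d" using rp by (intro rpow_d_mult) simp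
    finally have e: "real (mk K x) powr d = q ^ K * (real (mk K x) / r ^ K) powr d" .
    show "cc K x / (real (mk K x) / r ^ K) powr d = bseq p s A (mk K x)"
      unfolding bseq_def cc_def e using t0 q_pos by (simp add: field_simps)
  qed
  ultimately show ?thesis using lam_eq[OF xs] by (simp add: Lim_transform_eventually)
qed

lemma sK_alt: "sK al K x = indicator SS x * (r ^ K * fb al (mk K x))"
  unfolding sK_def mk_def by simp

lemma sK_bound: "\<bar>sK al K x\<bar> \<le> indicator SS x * r"
proof (cases "x \<in> SS")
  case False then show ?thesis unfolding sK_alt by simp
next
  case x: True
  have fb0: "\<And>n. 0 \<le> fb al n" unfolding fb_def by simp
  have "r ^ K * fb al (mk K x) \<le> r"
  proof (cases "K = 0")
    case True
    have "mk 0 x = 0" unfolding mk_def using x by (simp add: floor_eq_iff)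
    then show ?thesis using True r_pos unfolding fb_def by simp
  next
    case False
    then have K: "1 \<le> K" by simp
    have m: "s ^ (K - 1) \<le> mk K x" by (rule mk_lower[OF x K])
    have rp: "r ^ (K - 1) > 0" using r_pos by simp
    have mr: "r ^ (K - 1) \<le> real (mk K x)" using m
      by (simp only: of_nat_power[symmetric] of_nat_le_iff)
    have mpos: "real (mk K x) > 0" using mr rp by linarith
    have "fb al (mk K x) \<le> 1 / real (mk K x)" unfolding fb_def by simp
    also have "\<dots> \<le> 1 / r ^ (K - 1)" using mr rp mpos by (intro divide_left_mono) auto
    finally have "r ^ K * fb al (mk K x) \<le> r ^ K * (1 / r ^ (K - 1))"
      using r_pos by (intro mult_left_mono) auto
    also have "\<dots> = r" using K rp by (cases K) auto
    finally show ?thesis .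
  qed
  then show ?thesis unfolding sK_alt using x fb0 r_pos by simp
qed

lemma sK_meas: "sK al K \<in> borel_measurable lebesgue"
proof -
  have "(\<lambda>x. indicator SS x * (r ^ K * fb al (nat \<lfloor>r ^ K * x\<rfloor>))) \<in> borel_measurable borel"
    by measurable
  then have "(\<lambda>x. indicator SS x * (r ^ K * fb al (nat \<lfloor>r ^ K * x\<rfloor>))) \<in> borel_measurable lebesgue"
    by (intro measurable_completion) simp
  then show ?thesis unfolding sK_def .
qed

lemma T_conv:
  "(\<lambda>K. \<Sum>n\<in>{s ^ (K - 1)..<s ^ K}. fb al n)
     \<longlonglongrightarrow> integral\<^sup>L lebesgue (\<lambda>x. indicator {x \<in> SS. lam p s A x \<le> al} x * (1 / x))"
proof -
  let ?E = "{x \<in> SS. lam p s A x \<le> al}"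
  let ?f = "\<lambda>x. indicator ?E x * (1 / x)"
  have fm: "?f \<in> borel_measurable lebesgue"
  proof -
    have m1: "(\<lambda>x::real. 1 / x) \<in> borel_measurable lebesgue"
      by (intro measurable_completion) (simp add: borel_measurable_divide)
    have m2: "indicator ?E \<in> borel_measurable lebesgue"
      using E_meas[of al] by (rule borel_measurable_indicator)
    show ?thesis using borel_measurable_times[OF m2 m1] by simp
  qed
  have wi: "integrable lebesgue (\<lambda>x. indicator SS x * r)"
    by (intro integrable_mult_left integrable_real_indicator) auto
  have lim: "(\<lambda>K. integral\<^sup>L lebesgue (sK al K)) \<longlonglongrightarrow> integral\<^sup>L lebesgue ?f"
  proof (rule integral_dominated_convergence[OF fm sK_meas wi])
    show "AE x in lebesgue. norm (sK al K x) \<le> indicator SS x * r" for K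
      using sK_bound by simp
    show "AE x in lebesgue. (\<lambda>K. sK al K x) \<longlonglongrightarrow> ?f x"
    proof (rule AE_I'[OF Z_null[of al]], safe)
      fix x assume nc: "\<not> (\<lambda>K. sK al K x) \<longlonglongrightarrow> ?f x"
      show "x \<in> SS"
      proof (rule ccontr)
        assume "x \<notin> SS"
        then have e1: "(\<lambda>K. sK al K x) = (\<lambda>K. 0)" and e2: "?f x = 0" unfolding sK_alt by auto
        have "(\<lambda>K. sK al K x) \<longlonglongrightarrow> ?f x" unfolding e1 e2 by (rule tendsto_const)
        then show False using nc by blast
      qed
      then have x: "x \<in> SS" .
      have x0: "x > 0" using SS_pos[OF x] .
      show "lam p s A x = al"
      proof (rule ccontr)
        assume ne: "lam p s A x \<noteq> al"
        show False
        proof (cases "lam p s A x < al")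
          case True
          then have ev: "eventually (\<lambda>K. bseq p s A (mk K x) < al) sequentially"
            using b_conv[OF x] by (simp add: order_tendstoD(2))
          have "(\<lambda>K. 1 / (real (mk K x) / r ^ K)) \<longlonglongrightarrow> 1 / x"
            using x0 by (intro tendsto_divide tendsto_const mkr_conv[OF x]) auto
          moreover have "eventually (\<lambda>K. 1 / (real (mk K x) / r ^ K) = sK al K x) sequentially"
            using ev by eventually_elim (use x in \<open>simp add: sK_alt fb_def\<close>)
          ultimately have "(\<lambda>K. sK al K x) \<longlonglongrightarrow> 1 / x" by (rule Lim_transform_eventually)
          moreover have "?f x = 1 / x" using x True by simp
          ultimately show False using nc by metis
        next
          case False
          then have "lam p s A x > al" using ne by simp
          then have ev: "eventually (\<lambda>K. bseq p s A (mk K x) > al) sequentially"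
            using b_conv[OF x] by (simp add: order_tendstoD(1))
          have "eventually (\<lambda>K. 0 = sK al K x) sequentially"
            using ev by eventually_elim (simp add: sK_alt fb_def)
          then have "(\<lambda>K. sK al K x) \<longlonglongrightarrow> 0" by (rule Lim_transform_eventually[OF tendsto_const])
          moreover have "?f x = 0" using \<open>lam p s A x > al\<close> by (simp add: indicator_def)
          ultimately show False using nc by metis
        qed
      qed
    qed
  qed
  have "eventually (\<lambda>K. integral\<^sup>L lebesgue (sK al K) = (\<Sum>n\<in>{s ^ (K - 1)..<s ^ K}. fb al n)) sequentially"
    unfolding eventually_sequentially
    by (intro exI[of _ 1] allI impI has_bochner_integral_integral_eq sK_integral)
  from Lim_transform_eventually[OF lim this] show ?thesis .
qed

definition PP :: "real \<Rightarrow> nat \<Rightarrow> real" where "PP al K = (\<Sum>n\<in>{1..<s ^ K}. fb al n)"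

lemma fb_nonneg: "0 \<le> fb al n" unfolding fb_def by simp

lemma PP_nonneg: "0 \<le> PP al K" unfolding PP_def using fb_nonneg by (simp add: sum_nonneg)

lemma PP_cesaro:
  "(\<lambda>K. PP al K / real K)
     \<longlonglongrightarrow> integral\<^sup>L lebesgue (\<lambda>x. indicator {x \<in> SS. lam p s A x \<le> al} x * (1 / x))"
proof (rule cesaro)
  have "PP al (Suc K) - PP al K = (\<Sum>n\<in>{s ^ (Suc K - 1)..<s ^ Suc K}. fb al n)" for K
  proof -
    have "1 \<le> s ^ K" using s2 by simp
    moreover have "s ^ K \<le> s ^ Suc K" using s2 by simp
    ultimately have "PP al K + (\<Sum>n\<in>{s ^ K..<s ^ Suc K}. fb al n) = PP al (Suc K)"
      unfolding PP_def by (rule sum.atLeastLessThan_concat)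
    then show ?thesis by simp
  qed
  then show "(\<lambda>K. PP al (Suc K) - PP al K)
     \<longlonglongrightarrow> integral\<^sup>L lebesgue (\<lambda>x. indicator {x \<in> SS. lam p s A x \<le> al} x * (1 / x))"
    using LIMSEQ_Suc[OF T_conv[of al]] by simp
qed

lemma main:
  "((\<lambda>x. (1 / ln x) * (\<Sum>n\<in>{n. 1 \<le> n \<and> real n \<le> x \<and> bseq p s A n \<le> al}. 1 / real n))
     \<longlongrightarrow> (1 / ln r) * integral\<^sup>L lebesgue (\<lambda>x. indicator {x \<in> SS. lam p s A x \<le> al} x * (1 / x))) at_top"
proof -
  define J where "J = integral\<^sup>L lebesgue (\<lambda>x. indicator {x \<in> SS. lam p s A x \<le> al} x * (1 / x))"
  define Kx where "Kx x = nat \<lfloor>log r x\<rfloor>" for x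
  define S where "S x = (\<Sum>n\<in>{n. 1 \<le> n \<and> real n \<le> x \<and> bseq p s A n \<le> al}. 1 / real n)" for x
  have lr: "ln r > 0" using r_pos by simp
  have C: "(\<lambda>K. PP al K / real K) \<longlonglongrightarrow> J" unfolding J_def by (rule PP_cesaro)
  have lowlim: "(\<lambda>K. PP al K / ((real K + 1) * ln r)) \<longlonglongrightarrow> (1 / ln r) * J"
  proof -
    have "(\<lambda>K. (PP al K / real K) * (real K / real (Suc K)) * (1 / ln r)) \<longlonglongrightarrow> J * 1 * (1 / ln r)"
      by (intro tendsto_mult C LIMSEQ_n_over_Suc_n tendsto_const)
    moreover have "eventually (\<lambda>K. (PP al K / real K) * (real K / real (Suc K)) * (1 / ln r)
        = PP al K / ((real K + 1) * ln r)) sequentially"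
      unfolding eventually_sequentially
    proof (intro exI[of _ 1] allI impI)
      fix K :: nat assume "1 \<le> K"
      then have k0: "real K > 0" "real K + 1 > 0" by auto
      have "(PP al K / real K) * (real K / real (Suc K)) = PP al K / (real K + 1)"
        using k0 by (simp add: divide_simps)
      then show "(PP al K / real K) * (real K / real (Suc K)) * (1 / ln r) = PP al K / ((real K + 1) * ln r)"
        using lr k0 by simp
    qed
    ultimately show ?thesis by (simp add: Lim_transform_eventually mult.commute)
  qed
  have uplim: "(\<lambda>K. PP al (Suc K) / (real K * ln r)) \<longlonglongrightarrow> (1 / ln r) * J"
  proof -
    have "(\<lambda>K. (PP al (Suc K) / real (Suc K)) * (real (Suc K) / real K) * (1 / ln r)) \<longlonglongrightarrow> J * 1 * (1 / ln r)"
      by (intro tendsto_mult LIMSEQ_Suc[OF C] LIMSEQ_Suc_n_over_n tendsto_const)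
    moreover have "eventually (\<lambda>K. (PP al (Suc K) / real (Suc K)) * (real (Suc K) / real K) * (1 / ln r)
        = PP al (Suc K) / (real K * ln r)) sequentially"
      unfolding eventually_sequentially
    proof (intro exI[of _ 1] allI impI)
      fix K :: nat assume "1 \<le> K"
      then have k0: "real K > 0" "real K + 1 > 0" by auto
      have "(PP al (Suc K) / real (Suc K)) * (real (Suc K) / real K) = PP al (Suc K) / real K"
        by simp
      then show "(PP al (Suc K) / real (Suc K)) * (real (Suc K) / real K) * (1 / ln r) = PP al (Suc K) / (real K * ln r)"
        using lr k0 by simp
    qed
    ultimately show ?thesis by (simp add: Lim_transform_eventually mult.commute)
  qed
  have Klim: "filterlim Kx sequentially at_top"
    unfolding filterlim_at_top
  proof
    fix Z :: nat
    show "eventually (\<lambda>x. Z \<le> Kx x) at_top"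
      using eventually_ge_at_top[of "r ^ Z"]
    proof eventually_elim
      case (elim x)
      have x0: "x > 0" using elim r_pos by (smt (verit) zero_less_power)
      have "log r (r ^ Z) \<le> log r x" using elim r_pos x0 by (subst log_le_cancel_iff) auto
      then have "real Z \<le> log r x" using r_pos by (simp add: log_nat_power)
      then show ?case unfolding Kx_def by (rule le_nat_floor)
    qed
  qed
  have low: "((\<lambda>x. PP al (Kx x) / ((real (Kx x) + 1) * ln r)) \<longlongrightarrow> (1 / ln r) * J) at_top"
    by (rule filterlim_compose[OF lowlim Klim])
  have up: "((\<lambda>x. PP al (Suc (Kx x)) / (real (Kx x) * ln r)) \<longlongrightarrow> (1 / ln r) * J) at_top"
    by (rule filterlim_compose[OF uplim Klim])
  have bounds: "PP al (Kx x) / ((real (Kx x) + 1) * ln r) \<le> (1 / ln x) * S x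
      \<and> (1 / ln x) * S x \<le> PP al (Suc (Kx x)) / (real (Kx x) * ln r)" if x: "x \<ge> r" for x
  proof -
    let ?K = "Kx x"
    have x0: "x > 0" using x r_pos by simp
    have "log r r \<le> log r x" using x r_pos x0 by (subst log_le_cancel_iff) auto
    then have lx: "log r x \<ge> 1" using r_pos by simp
    have K1: "?K \<ge> 1" unfolding Kx_def using lx by (simp add: le_nat_floor)
    have Kl: "real ?K \<le> log r x" "log r x < real ?K + 1" unfolding Kx_def using lx by linarith+
    have lnx: "ln x = log r x * ln r" using lr by (simp add: log_def)
    have ln1: "real ?K * ln r \<le> ln x" "ln x < (real ?K + 1) * ln r"
      unfolding lnx using Kl lr by (auto intro: mult_right_mono)
    have xr: "x = r powr log r x" using r_pos x0 by simp
    have rK: "r ^ ?K \<le> x"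
    proof -
      have "r powr real ?K \<le> r powr log r x" using Kl r_pos by (intro powr_mono) auto
      then show ?thesis using r_pos x0 by (simp add: powr_realpow)
    qed
    have rK1: "x < r ^ Suc ?K"
    proof -
      have "r powr log r x < r powr real (Suc ?K)" using Kl r_pos by (intro powr_less_mono) auto
      moreover have "r powr real (Suc ?K) = r ^ Suc ?K" using r_pos by (intro powr_realpow) simp
      ultimately show ?thesis using r_pos x0 by simp
    qed
    have fin: "finite {n. 1 \<le> n \<and> real n \<le> x}"
      by (rule finite_subset[of _ "{..nat \<lfloor>x\<rfloor>}"]) (auto intro: le_nat_floor)
    have Sx: "S x = (\<Sum>n\<in>{n. 1 \<le> n \<and> real n \<le> x}. fb al n)"
    proof -
      have "S x = (\<Sum>n\<in>{n \<in> {n. 1 \<le> n \<and> real n \<le> x}. bseq p s A n \<le> al}. 1 / real n)"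
        unfolding S_def by (rule sum.cong) auto
      also have "\<dots> = (\<Sum>n\<in>{n. 1 \<le> n \<and> real n \<le> x}. fb al n)"
        unfolding fb_def using fin by (rule sum.inter_filter)
      finally show ?thesis .
    qed
    have sub1: "{1..<s ^ ?K} \<subseteq> {n. 1 \<le> n \<and> real n \<le> x}"
    proof
      fix n assume "n \<in> {1..<s ^ ?K}"
      then have n1: "1 \<le> n" and "n < s ^ ?K" by auto
      then have "real n < real (s ^ ?K)" by (simp only: of_nat_less_iff)
      then have "real n < r ^ ?K" by simp
      then have "real n \<le> x" using rK by linarith
      then show "n \<in> {n. 1 \<le> n \<and> real n \<le> x}" using n1 by simp
    qed
    have sub2: "{n. 1 \<le> n \<and> real n \<le> x} \<subseteq> {1..<s ^ Suc ?K}"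
    proof
      fix n assume n: "n \<in> {n. 1 \<le> n \<and> real n \<le> x}"
      then have "real n < real (s ^ Suc ?K)" using rK1 by simp
      then show "n \<in> {1..<s ^ Suc ?K}" using n by (simp only: of_nat_less_iff) simp
    qed
    have P1: "PP al ?K \<le> S x" unfolding Sx PP_def
      by (rule sum_mono2) (use sub1 fb_nonneg fin in auto)
    have P2: "S x \<le> PP al (Suc ?K)" unfolding Sx PP_def
      by (rule sum_mono2) (use sub2 fb_nonneg in auto)
    have S0: "0 \<le> S x" using P1 PP_nonneg[of al ?K] by simp
    have Kp: "real ?K * ln r > 0" using K1 lr by simp
    have lxp: "ln x > 0" using ln1 Kp by linarith
    have "PP al ?K / ((real ?K + 1) * ln r) \<le> PP al ?K / ln x"
      using PP_nonneg[of al ?K] lxp ln1 by (intro divide_left_mono) auto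
    also have "\<dots> \<le> S x / ln x" using P1 lxp by (intro divide_right_mono) auto
    finally have c1: "PP al ?K / ((real ?K + 1) * ln r) \<le> (1 / ln x) * S x" by simp
    have "S x / ln x \<le> PP al (Suc ?K) / ln x" using P2 lxp by (intro divide_right_mono) auto
    also have "\<dots> \<le> PP al (Suc ?K) / (real ?K * ln r)"
      using PP_nonneg[of al "Suc ?K"] Kp ln1 by (intro divide_left_mono) auto
    finally have c2: "(1 / ln x) * S x \<le> PP al (Suc ?K) / (real ?K * ln r)" by simp
    show ?thesis using c1 c2 by simp
  qed
  have "((\<lambda>x. (1 / ln x) * S x) \<longlongrightarrow> (1 / ln r) * J) at_top"
  proof (rule tendsto_sandwich[OF _ _ low up])
    show "\<forall>\<^sub>F x in at_top. PP al (Kx x) / ((real (Kx x) + 1) * ln r) \<le> 1 / ln x * S x"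
      using eventually_ge_at_top[of r] by eventually_elim (use bounds in blast)
    show "\<forall>\<^sub>F x in at_top. 1 / ln x * S x \<le> PP al (Suc (Kx x)) / (real (Kx x) * ln r)"
      using eventually_ge_at_top[of r] by eventually_elim (use bounds in blast)
  qed
  then show ?thesis unfolding S_def J_def .
qed

end

theorem theorem4:
  fixes p s :: nat and A :: "nat set" and \<alpha> :: real
  assumes "p \<ge> 3" and "2 \<le> s" and "s < p"
    and "A \<subseteq> {0..<p}" and "card A = s"
    and "Inf (bseq p s A ` {1..}) \<le> \<alpha>" and "\<alpha> \<le> Sup (bseq p s A ` {1..})"
  shows "((\<lambda>x. (1 / ln x) * (\<Sum>n\<in>{n. 1 \<le> n \<and> real n \<le> x \<and> bseq p s A n \<le> \<alpha>}. 1 / real n))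
          \<longlongrightarrow> (1 / ln (real s)) *
              (LINT x:{x \<in> {1 / real s..<1}. lam p s A x \<le> \<alpha>}|lebesgue. 1 / x)) at_top"
proof -
  interpret dig p s A using assms(1-5) by unfold_locales
  show ?thesis using main[of \<alpha>] by (simp add: set_lebesgue_integral_def)
qed

end
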